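(* Let $P_n(x;a,b,c,d|q)$ denote the monic Askey–Wilson polynomials. Then $$\Big(x-\tfrac{a^{-1}+a}{2}\Big)P_n(x;aq,b,c,d|q)=P_{n+1}(x;a,b,c,d|q)+k_n^{(a,b,c,d)}P_n(x;a,b,c,d|q),$$ $$\Big(x-\tfrac{b^{-1}+b}{2}\Big)P_n(x;a,bq,c,d|q)=P_{n+1}(x;a,b,c,d|q)+k_n^{(b,a,c,d)}P_n(x;a,b,c,d|q),$$ $$\Big(x-\tfrac{c^{-1}+c}{2}\Big)P_n(x;a,b,cq,d|q)=P_{n+1}(x;a,b,c,d|q)+k_n^{(c,b,a,d)}P_n(x;a,b,c,d|q),$$ $$\Big(x-\tfrac{d^{-1}+d}{2}\Big)P_n(x;a,b,c,dq|q)=P_{n+1}(x;a,b,c,d|q)+k_n^{(d,b,c,a)}P_n(x;a,b,c,d|q),$$ where $$k_n^{(a,b,c,d)}=-\frac{(1-abq^n)(1-acq^n)(1-adq^n)(1-abcdq^{n-1})}{2a(1-abcdq^{2n-1})(1-abcdq^{2n})}$$ and $k_n^{(e_1,e_2,e_3,e_4)}$ denotes this expression with $(a,b,c,d)$ replaced by $(e_1,e_2,e_3,e_4)$.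
   Context: With $(a;q)_0=1$, $(a;q)_k=\prod_{j=0}^{k-1}(1-aq^j)$, $(a_1,\dots,a_i;q)_k=\prod_j(a_j;q)_k$, and $x=\cos\theta$, the Askey–Wilson polynomials are $p_n(x;a,b,c,d|q)=a^{-n}(ab,ac,ad;q)_n\sum_{k=0}^{n}\frac{(q^{-n},abcdq^{n-1},ae^{i\theta},ae^{-i\theta};q)_k}{(ab,ac,ad,q;q)_k}q^k$, and the monic Askey–Wilson polynomials are $P_n(x;a,b,c,d|q)=\dfrac{p_n(x;a,b,c,d|q)}{2^n(abcdq^{n-1};q)_n}$. *)

theory Defs
  imports Complex_Main
begin

definition qpoch :: "complex \<Rightarrow> complex \<Rightarrow> nat \<Rightarrow> complex" where
  "qpoch a q k = (\<Prod>j<k. (1 - a * q ^ j))"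

text \<open>Askey-Wilson polynomial p_n(x;a,b,c,d|q), evaluated at x = cos theta.\<close>
definition aw_p :: "nat \<Rightarrow> complex \<Rightarrow> complex \<Rightarrow> complex \<Rightarrow> complex \<Rightarrow> complex \<Rightarrow> complex \<Rightarrow> complex" where
  "aw_p n a b c d q \<theta> =
     inverse (a ^ n) * qpoch (a*b) q n * qpoch (a*c) q n * qpoch (a*d) q n *
     (\<Sum>k=0..n.
        (qpoch (inverse (q ^ n)) q k * qpoch (a*b*c*d * q powi (int n - 1)) q k
         * qpoch (a * exp (\<i> * \<theta>)) q k * qpoch (a * exp (- \<i> * \<theta>)) q k)
        / (qpoch (a*b) q k * qpoch (a*c) q k * qpoch (a*d) q k * qpoch q q k) * q ^ k)"

definition aw_P :: "nat \<Rightarrow> complex \<Rightarrow> complex \<Rightarrow> complex \<Rightarrow> complex \<Rightarrow> complex \<Rightarrow> complex \<Rightarrow> complex" where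
  "aw_P n a b c d q \<theta> =
     aw_p n a b c d q \<theta> / (2 ^ n * qpoch (a*b*c*d * q powi (int n - 1)) q n)"

definition aw_k :: "nat \<Rightarrow> complex \<Rightarrow> complex \<Rightarrow> complex \<Rightarrow> complex \<Rightarrow> complex \<Rightarrow> complex" where
  "aw_k n a b c d q =
     - ((1 - a*b*q^n) * (1 - a*c*q^n) * (1 - a*d*q^n) * (1 - a*b*c*d * q powi (int n - 1)))
     / (2 * a * (1 - a*b*c*d * q powi (2 * int n - 1)) * (1 - a*b*c*d * q ^ (2*n)))"

end

theory Submission
  imports Defs "HOL-Analysis.Complex_Transcendental"
begin



lemma qpoch_0[simp]: "qpoch a q 0 = 1" by (simp add: qpoch_def)
lemma qpoch_Suc: "qpoch a q (Suc k) = qpoch a q k * (1 - a*q^k)"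
  by (simp add: qpoch_def)
lemma qpoch_Suc_shift: "qpoch a q (Suc k) = (1 - a) * qpoch (a*q) q k"
  unfolding qpoch_def prod.lessThan_Suc_shift by (simp add: mult_ac)
lemma qpoch_nz: "(\<And>j. j < k \<Longrightarrow> 1 - a*q^j \<noteq> 0) \<Longrightarrow> qpoch a q k \<noteq> 0"
  unfolding qpoch_def by (simp add: prod_zero_iff)
lemma qpoch_inv_zero: "q \<noteq> 0 \<Longrightarrow> n < k \<Longrightarrow> qpoch (inverse (q^n)) q k = 0"
  unfolding qpoch_def by (rule prod_zero) (auto intro!: bexI[of _ n])
lemma powi_nm1: "(q::complex) \<noteq> 0 \<Longrightarrow> q powi (int n - 1) = q^n / q"
  by (simp add: power_int_diff)
lemma powi_2nm1: "(q::complex) \<noteq> 0 \<Longrightarrow> q powi (2 * int n - 1) = (q^n)^2 / q"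
proof -
  assume "q \<noteq> 0"
  have "q powi (2 * int n) = q powi int (n*2)" by (simp add: mult.commute)
  also have "\<dots> = q^(n*2)" by (rule power_int_of_nat)
  also have "\<dots> = (q^n)^2" by (simp add: power_mult)
  finally have "q powi (2 * int n) = (q^n)^2" .
  then show ?thesis using \<open>q \<noteq> 0\<close> by (simp add: power_int_diff)
qed

definition phi :: "complex \<Rightarrow> complex \<Rightarrow> complex \<Rightarrow> nat \<Rightarrow> complex" where
  "phi a q \<theta> j = qpoch (a * exp (\<i> * \<theta>)) q j * qpoch (a * exp (- \<i> * \<theta>)) q j"

definition Cf :: "nat \<Rightarrow> complex \<Rightarrow> complex \<Rightarrow> complex \<Rightarrow> complex \<Rightarrow> complex \<Rightarrow> nat \<Rightarrow> complex" where
  "Cf n a b c d q j = inverse (a ^ n) * qpoch (a*b) q n * qpoch (a*c) q n * qpoch (a*d) q n *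
     ((qpoch (inverse (q ^ n)) q j * qpoch (a*b*c*d * q powi (int n - 1)) q j)
        / (qpoch (a*b) q j * qpoch (a*c) q j * qpoch (a*d) q j * qpoch q q j) * q ^ j)
     / (2 ^ n * qpoch (a*b*c*d * q powi (int n - 1)) q n)"

lemma aw_P_sum: "aw_P n a b c d q \<theta> = (\<Sum>j\<le>n. Cf n a b c d q j * phi a q \<theta> j)"
  unfolding aw_P_def aw_p_def Cf_def phi_def atLeast0AtMost
  by (simp add: sum_distrib_left sum_divide_distrib divide_inverse mult_ac)

lemma Cf_top: "q \<noteq> 0 \<Longrightarrow> Cf n a b c d q (Suc n) = 0"
  unfolding Cf_def by (simp add: qpoch_inv_zero)

lemma phi_Suc: "phi a q \<theta> (Suc j) = phi a q \<theta> j * ((1 - a*q^j*exp (\<i> * \<theta>)) * (1 - a*q^j*exp (- \<i> * \<theta>)))"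
  unfolding phi_def qpoch_Suc by (simp add: mult_ac)

lemma phi_Suc_shift: "phi a q \<theta> (Suc j) = ((1 - a*exp (\<i> * \<theta>)) * (1 - a*exp (- \<i> * \<theta>))) * phi (a*q) q \<theta> j"
  unfolding phi_def qpoch_Suc_shift by (simp add: mult_ac)

lemma phi_step:
  assumes "a \<noteq> 0" "q \<noteq> 0"
  shows "cos \<theta> * phi a q \<theta> j = - phi a q \<theta> (Suc j) / (2*a*q^j) + (a*q^j + inverse (a*q^j))/2 * phi a q \<theta> j"
proof -
  define z where "z = exp (\<i> * \<theta>)"
  define w where "w = exp (- \<i> * \<theta>)"
  define u where "u = a*q^j"
  define P where "P = phi a q \<theta> j"
  have zw: "z*w = 1" unfolding z_def w_def by (simp add: exp_add[symmetric])
  have c: "cos \<theta> = (z+w)/2" unfolding z_def w_def cos_exp_eq by simp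
  have u: "u \<noteq> 0" using assms unfolding u_def by simp
  have H: "- ((1 - u*z)*(1-u*w)) / (2*u) + (u + inverse u)/2 = (z+w)/2"
    using u zw by (simp add: field_simps)
  have eq: "phi a q \<theta> (Suc j) = P * ((1 - u*z)*(1-u*w))"
    unfolding phi_Suc P_def u_def z_def w_def by simp
  have "cos \<theta> * P = (- ((1 - u*z)*(1-u*w)) / (2*u) + (u + inverse u)/2) * P"
    unfolding c H ..
  also have "\<dots> = - (P * ((1 - u*z)*(1-u*w))) / (2*u) + (u + inverse u)/2 * P"
    by (simp add: algebra_simps)
  finally show ?thesis unfolding eq P_def u_def by (simp add: mult.assoc)
qed

lemma phi_step_a:
  assumes "a \<noteq> 0"
  shows "(cos \<theta> - (inverse a + a)/2) * phi (a*q) q \<theta> j = - phi a q \<theta> (Suc j) / (2*a)"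
proof -
  define z where "z = exp (\<i> * \<theta>)"
  define w where "w = exp (- \<i> * \<theta>)"
  define P where "P = phi (a*q) q \<theta> j"
  have zw: "z*w = 1" unfolding z_def w_def by (simp add: exp_add[symmetric])
  have c: "cos \<theta> = (z+w)/2" unfolding z_def w_def cos_exp_eq by simp
  have H: "((z+w)/2 - (inverse a + a)/2) = - ((1 - a*z)*(1-a*w)) / (2*a)"
    using assms zw by (simp add: field_simps)
  have eq: "phi a q \<theta> (Suc j) = ((1 - a*z)*(1-a*w)) * P"
    unfolding phi_Suc_shift P_def z_def w_def by simp
  show ?thesis unfolding c H eq P_def by simp
qed




lemma polyB:
  fixes a b c d q Q r :: complex
  shows "- ((1-a*c*r)*(1-a*d*r)*(1-q*r))*(1-a*b*c*d*Q^2)*b*Q-(a*q*r-b)*(Q-r)*(1-a*b*c*d*Q*r)*(1-a*b*c*d*Q^2)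
   = (1-a*c*Q)*(1-a*d*Q)*(Q*q-1)*(1-a*b*c*d*Q*r)*b*r-a*(1-b*c*Q)*(1-b*d*Q)*(q-a*b*c*d*Q)*(Q-r)*r"
  by algebra

lemma canc4:
  fixes A B b Y X U W :: complex
  assumes "A \<noteq> 0" "B \<noteq> 0" "b \<noteq> 0" "Y \<noteq> 0" "X \<noteq> 0"
  shows "(- (A*U) / (2*b*B*Y)) * (B*W / (A*X)) = - (U*W) / (2*b*Y*X)"
  using assms by (simp add: field_simps)

lemma aux4:
  fixes a b q Q r X Y U V W :: complex
  assumes "a \<noteq> 0" "b \<noteq> 0" "q \<noteq> 0" "Q \<noteq> 0" "r \<noteq> 0" "X \<noteq> 0" "Y \<noteq> 0"
  shows "-(U*(V/q)*(W/Q)*q)/(2*b*Y*X) = -(a*U*V*W*r*q)/(2*a*b*r*Q*q*X*Y)"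
  using assms by (simp add: field_simps)

lemma pureB:
  fixes a b c d q Q r :: complex
  assumes "a \<noteq> 0" "b \<noteq> 0" "q \<noteq> 0" "Q \<noteq> 0" "r \<noteq> 0"
    "1 - a*b*q*r \<noteq> 0" "1 - a*c*r \<noteq> 0" "1 - a*d*r \<noteq> 0" "1 - q*r \<noteq> 0"
    "1 - a*b*c*d*Q^2 \<noteq> 0" "1 - a*b*c*d*Q^2/q \<noteq> 0" "1 - a*b*Q \<noteq> 0"
  shows "- 1/(2*a*r) + ((a*q*r + inverse (a*q*r))/2 - (inverse b + b)/2) *
      ((1 - r/Q)*(1 - a*b*c*d*Q*r)*q / ((1 - a*b*q*r)*(1 - a*c*r)*(1 - a*d*r)*(1 - q*r)))
   = (1 - a*c*Q)*(1 - a*d*Q)*(1 - 1/(Q*q))*(1 - a*b*c*d*Q*r)*q / (2*a*(1 - a*b*c*d*Q^2)*(1 - a*c*r)*(1 - a*d*r)*(1 - q*r))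
     + (- ((1 - b*a*Q)*(1 - b*c*Q)*(1 - b*d*Q)*(1 - b*a*c*d*Q/q)) / (2*b*(1 - b*a*c*d*Q^2/q)*(1 - b*a*c*d*Q^2)))
       * ((1 - a*b*c*d*Q^2/q)*(1 - r/Q)*q / ((1 - a*b*Q)*(1 - a*c*r)*(1 - a*d*r)*(1 - q*r)))"
proof -
  define T where "T = a*b*c*d"
  define X where "X = (1 - a*c*r)*(1 - a*d*r)*(1 - q*r)"
  define Dn where "Dn = 2*a*b*r*Q*q*X*(1-T*Q^2)"
  have e: "b*a*c*d = T" "b*a*Q = a*b*Q" "a*b*c*d = T" by (simp_all add: mult_ac T_def)
  have X: "X \<noteq> 0" using assms unfolding X_def by simp
  have T2: "1-T*Q^2 \<noteq> 0" using assms unfolding T_def by simp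
  have Dn: "Dn \<noteq> 0" using assms X T2 unfolding Dn_def by simp
  have T2q: "1 - T*Q^2/q \<noteq> 0" using assms(11) unfolding T_def by simp
  have qT: "q - T*Q^2 \<noteq> 0" using assms(3,11) unfolding T_def by (simp add: field_simps)
  have s1: "- 1/(2*a*r) = -(b*Q*q*X*(1-T*Q^2))/Dn"
    using assms X T2 unfolding Dn_def by (simp add: field_simps)
  have g: "(a*q*r + inverse (a*q*r))/2 - (inverse b + b)/2 = -(a*q*r-b)*(1-a*b*q*r)/(2*a*b*q*r)"
    using assms by (simp add: field_simps)
  have dX: "(1 - a*b*q*r)*(1 - a*c*r)*(1 - a*d*r)*(1 - q*r) = (1-a*b*q*r)*X"
    by (simp add: X_def mult_ac)
  have s2: "((a*q*r + inverse (a*q*r))/2 - (inverse b + b)/2) *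
      ((1 - r/Q)*(1 - T*Q*r)*q / ((1 - a*b*q*r)*(1 - a*c*r)*(1 - a*d*r)*(1 - q*r)))
     = -((a*q*r-b)*(Q-r)*(1-T*Q*r)*(1-T*Q^2)*q)/Dn"
    unfolding g dX using assms X T2 unfolding Dn_def 
    by (simp add: field_simps)
  have dX3: "2*a*(1 - T*Q^2)*(1 - a*c*r)*(1 - a*d*r)*(1 - q*r) = 2*a*(1 - T*Q^2)*X"
    by (simp add: X_def mult_ac)
  have dX4: "(1 - a*b*Q)*(1 - a*c*r)*(1 - a*d*r)*(1 - q*r) = (1 - a*b*Q)*X"
    by (simp add: X_def mult_ac)
  have s3: "(1 - a*c*Q)*(1 - a*d*Q)*(1 - 1/(Q*q))*(1 - T*Q*r)*q / (2*a*(1 - T*Q^2)*(1 - a*c*r)*(1 - a*d*r)*(1 - q*r))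
     = (1-a*c*Q)*(1-a*d*Q)*(Q*q-1)*(1-T*Q*r)*b*r*q/Dn"
    unfolding dX3 using assms X T2 unfolding Dn_def by (simp add: field_simps)
  have c4: "(- ((1 - a*b*Q)*(1 - b*c*Q)*(1 - b*d*Q)*(1 - T*Q/q)) / (2*b*(1 - T*Q^2/q)*(1 - T*Q^2)))
       * ((1 - T*Q^2/q)*(1 - r/Q)*q / ((1 - a*b*Q)*X))
     = - ((1 - b*c*Q)*(1 - b*d*Q)*(1 - T*Q/q)*(1 - r/Q)*q) / (2*b*(1 - T*Q^2)*X)"
    using canc4[of "1 - a*b*Q" "1 - T*Q^2/q" b "1 - T*Q^2" X "(1 - b*c*Q)*(1 - b*d*Q)*(1 - T*Q/q)" "(1 - r/Q)*q"]
      assms X T2 T2q by (simp add: mult_ac)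
  have u1: "1 - T*Q/q = (q-T*Q)/q" "1 - r/Q = (Q-r)/Q" using assms by (simp_all add: field_simps)
  have s4: "(- ((1 - a*b*Q)*(1 - b*c*Q)*(1 - b*d*Q)*(1 - T*Q/q)) / (2*b*(1 - T*Q^2/q)*(1 - T*Q^2)))
       * ((1 - T*Q^2/q)*(1 - r/Q)*q / ((1 - a*b*Q)*(1 - a*c*r)*(1 - a*d*r)*(1 - q*r)))
     = -(a*(1-b*c*Q)*(1-b*d*Q)*(q-T*Q)*(Q-r)*r*q)/Dn"
    unfolding dX4 c4 unfolding u1 Dn_def using aux4[of a b q Q r X "1-T*Q^2" "(1-b*c*Q)*(1-b*d*Q)" "q-T*Q" "Q-r"] assms X T2
    by (simp add: mult_ac)
  have P: "-(b*Q*q*X*(1-T*Q^2)) + -((a*q*r-b)*(Q-r)*(1-T*Q*r)*(1-T*Q^2)*q)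
     = (1-a*c*Q)*(1-a*d*Q)*(Q*q-1)*(1-T*Q*r)*b*r*q + -(a*(1-b*c*Q)*(1-b*d*Q)*(q-T*Q)*(Q-r)*r*q)"
    unfolding X_def T_def by algebra
  show ?thesis unfolding e s1 s2 s3 s4 add_divide_distrib[symmetric] P ..
qed



lemma Tnz:
  fixes a b c d q :: complex
  assumes "q \<noteq> 0" "\<forall>m::int. int n - 1 \<le> m \<and> m \<le> 2 * int n \<longrightarrow> 1 - a*b*c*d * q powi m \<noteq> 0"
    "n \<le> Suc m" "m \<le> 2*n"
  shows "1 - a*b*c*d*q^m \<noteq> 0"
  using assms(2)[rule_format, of "int m"] assms(3,4) by (simp add: power_int_of_nat)

lemma cancel_helper: fixes x y z :: complex assumes "x = z * inverse z * y" "z \<noteq> 0" shows "x = y"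
  using assms by simp

lemma cancel_helper2: fixes x y z v :: complex assumes "x = z * inverse z * (v * inverse v * y)" "z \<noteq> 0" "v \<noteq> 0" shows "x = y"
  using assms by simp

lemma final_helper: fixes F m g r1 r2 r3 k :: complex
  assumes "m + g*r1 = r2 + k*r3" shows "F*r2 + k*(F*r3) = F*m + g*(F*r1)"
proof -
  have "F*r2 + k*(F*r3) = F*(r2 + k*r3)" by (simp add: algebra_simps)
  also have "\<dots> = F*(m + g*r1)" using assms by simp
  finally show ?thesis by (simp add: algebra_simps)
qed

lemma canc3: fixes u1 u2 u3 x1 y1 z1 p1 :: complex
  assumes "u1 \<noteq> 0" "u2 \<noteq> 0" "u3 \<noteq> 0"
  shows "u1*u2*x1*u3*y1/(z1*u3*u1*u2*p1) = x1*y1/(z1*p1)"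
  using assms by (simp add: field_simps)

lemma Cf_Suc: "Cf n a b c d q (Suc j) = Cf n a b c d q j * ((1 - inverse (q^n)*q^j) * (1 - a*b*c*d*q powi (int n - 1)*q^j) * q / ((1 - a*b*q^j)*(1 - a*c*q^j)*(1 - a*d*q^j)*(1 - q*q^j)))"
  unfolding Cf_def qpoch_Suc by (simp add: divide_inverse inverse_mult_distrib mult_ac)

lemma coefB_Suc:
  fixes a b c d q :: complex
  assumes nz: "a \<noteq> 0" "b \<noteq> 0" "c \<noteq> 0" "d \<noteq> 0" "q \<noteq> 0"
    and kn: "k \<le> n"
    and hab: "\<forall>j\<le>n. 1 - a*b*q^j \<noteq> 0" and hac: "\<forall>j\<le>n. 1 - a*c*q^j \<noteq> 0"
    and had: "\<forall>j\<le>n. 1 - a*d*q^j \<noteq> 0"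
    and gen_q: "\<forall>j\<in>{1..n+1}. 1 - q ^ j \<noteq> 0"
    and gen_abcd: "\<forall>m::int. int n - 1 \<le> m \<and> m \<le> 2 * int n \<longrightarrow> 1 - a*b*c*d * q powi m \<noteq> 0"
  shows "Cf (Suc n) a b c d q (Suc k) + aw_k n b a c d q * Cf n a b c d q (Suc k)
    = - Cf n a (b*q) c d q k / (2*a*q^k)
      + ((a*q^(Suc k) + inverse (a*q^(Suc k)))/2 - (inverse b + b)/2) * Cf n a (b*q) c d q (Suc k)"
proof -
  define T where "T = a*b*c*d"
  define Q where "Q = q^n"
  define r where "r = q^k"
  define A where "A = qpoch (a*(b*q)) q n"
  define A0 where "A0 = qpoch (a*b) q n"
  define AC where "AC = qpoch (a*c) q n"
  define AD where "AD = qpoch (a*d) q n"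
  define I where "I = qpoch (inverse Q) q k"
  define S where "S = qpoch (T*Q) q k"
  define S0 where "S0 = qpoch (T*Q) q n"
  define S1 where "S1 = qpoch (T*Q/q) q n"
  define B where "B = qpoch (a*(b*q)) q k"
  define Pc where "Pc = qpoch (a*c) q k"
  define Pd where "Pd = qpoch (a*d) q k"
  define Qk where "Qk = qpoch q q k"
  define F where "F = Cf n a (b*q) c d q k"
  have Q0: "Q \<noteq> 0" and r0: "r \<noteq> 0" using nz unfolding Q_def r_def by simp_all
  have hT: "\<And>m. n \<le> Suc m \<Longrightarrow> m \<le> 2*n \<Longrightarrow> 1 - T*q^m \<noteq> 0"
    unfolding T_def using Tnz[OF nz(5) gen_abcd] by blast
  have B0: "B \<noteq> 0" unfolding B_def
  proof (rule qpoch_nz)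
    fix j assume "j < k" then show "1 - a*(b*q) * q^j \<noteq> 0" using hab[rule_format, of "Suc j"] kn by (simp add: mult_ac)
  qed
  have Pc0: "Pc \<noteq> 0" unfolding Pc_def by (rule qpoch_nz) (use hac kn in auto)
  have Pd0: "Pd \<noteq> 0" unfolding Pd_def by (rule qpoch_nz) (use had kn in auto)
  have Qk0: "Qk \<noteq> 0" unfolding Qk_def
  proof (rule qpoch_nz)
    fix j assume "j < k" then show "1 - q * q^j \<noteq> 0" using gen_q kn by (auto simp flip: power_Suc)
  qed
  have S00: "S0 \<noteq> 0" unfolding S0_def
  proof (rule qpoch_nz)
    fix j assume "j < n" then show "1 - T*Q*q^j \<noteq> 0" using hT[of "n+j"] unfolding Q_def by (simp add: power_add mult.assoc)
  qed
  have abQ: "1 - a*b*Q \<noteq> 0" using hab unfolding Q_def by simp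
  have ab1: "1 - a*b \<noteq> 0" using hab[rule_format, of 0] by simp
  have acr: "1 - a*c*r \<noteq> 0" using hac kn unfolding r_def by simp
  have adr: "1 - a*d*r \<noteq> 0" using had kn unfolding r_def by simp
  have qr: "1 - q*r \<noteq> 0" using gen_q kn unfolding r_def by (auto simp flip: power_Suc)
  have TQ2: "1 - T*Q^2 \<noteq> 0" using hT[of "2*n"] unfolding Q_def by (simp add: power_mult mult.commute)
  have TQ2q: "1 - T*Q^2/q \<noteq> 0" using gen_abcd[rule_format, of "2 * int n - 1"] powi_2nm1[OF nz(5), of n]
    unfolding T_def Q_def by simp
  have TQq: "1 - T*Q/q \<noteq> 0" using gen_abcd[rule_format, of "int n - 1"] powi_nm1[OF nz(5), of n]
    unfolding T_def Q_def by simp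
  have arg1: "a*(b*q)*c*d*q powi (int n - 1) = T*Q"
    using nz unfolding T_def Q_def by (simp add: powi_nm1)
  have eF: "F = inverse(a^n)*A*AC*AD*((I*S)/(B*Pc*Pd*Qk)*r)/(2^n*S0)"
    unfolding F_def Cf_def arg1 A_def AC_def AD_def I_def S_def S0_def B_def Pc_def Pd_def Qk_def Q_def r_def by simp
  have E1: "Cf n a (b*q) c d q (Suc k) = F * ((1-r/Q)*(1-T*Q*r)*q/((1-a*b*q*r)*(1-a*c*r)*(1-a*d*r)*(1-q*r)))"
    unfolding Cf_Suc arg1 F_def[symmetric] Q_def[symmetric] r_def[symmetric]
    by (simp add: divide_inverse mult_ac)
  define Z where "Z = 1 - a*b"
  have Z0: "Z \<noteq> 0" using ab1 unfolding Z_def .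
  have h1: "qpoch (a*b) q (Suc n) = Z*A" unfolding qpoch_Suc_shift A_def Z_def by (simp add: mult.assoc)
  have h2: "qpoch (a*c) q (Suc n) = AC*(1-a*c*Q)" unfolding qpoch_Suc AC_def Q_def ..
  have h3: "qpoch (a*d) q (Suc n) = AD*(1-a*d*Q)" unfolding qpoch_Suc AD_def Q_def ..
  have h4: "qpoch (inverse (q^Suc n)) q (Suc k) = (1 - inverse(Q*q))*I"
  proof -
    have e: "inverse (q^Suc n) * q = inverse Q" using nz unfolding Q_def by (simp add: field_simps)
    have e2: "inverse (q^Suc n) = inverse(Q*q)" unfolding Q_def by (simp add: mult.commute)
    show ?thesis unfolding qpoch_Suc_shift e unfolding e2 I_def ..
  qed
  have arg2: "a*b*c*d*q powi (int (Suc n) - 1) = T*Q" unfolding T_def Q_def by (simp add: power_int_of_nat)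
  have h5: "qpoch (T*Q) q (Suc k) = S*(1-T*Q*r)" unfolding qpoch_Suc S_def r_def by simp
  have h6: "qpoch (T*Q) q (Suc n) = S0*(1-T*Q^2)" unfolding qpoch_Suc S0_def Q_def by (simp add: power2_eq_square)
  have h7: "qpoch (a*b) q (Suc k) = Z*B" unfolding qpoch_Suc_shift B_def Z_def by (simp add: mult.assoc)
  have h8: "qpoch (a*c) q (Suc k) = Pc*(1-a*c*r)" unfolding qpoch_Suc Pc_def r_def ..
  have h9: "qpoch (a*d) q (Suc k) = Pd*(1-a*d*r)" unfolding qpoch_Suc Pd_def r_def ..
  have h10: "qpoch q q (Suc k) = Qk*(1-q*r)" unfolding qpoch_Suc Qk_def r_def ..
  have iab: "(1-a*b)*inverse(1-a*b) = 1" using ab1 by simp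
  have E2: "Cf (Suc n) a b c d q (Suc k) = F * ((1-a*c*Q)*(1-a*d*Q)*(1-1/(Q*q))*(1-T*Q*r)*q/(2*a*(1-T*Q^2)*(1-a*c*r)*(1-a*d*r)*(1-q*r)))"
    unfolding Cf_def arg2 h1 h2 h3 h4 h5 h6 h7 h8 h9 h10 eF
    unfolding divide_inverse inverse_mult_distrib power_Suc r_def[symmetric]
    by (rule cancel_helper[where z="Z"]) (algebra, rule Z0)
  define V where "V = 1 - T*Q/q"
  define W1 where "W1 = 1 - a*b*Q"
  define W2 where "W2 = 1 - T*Q^2/q"
  have V0: "V \<noteq> 0" using TQq unfolding V_def .
  have W10: "W1 \<noteq> 0" using abQ unfolding W1_def .
  have W20: "W2 \<noteq> 0" using TQ2q unfolding W2_def .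
  have arg3: "a*b*c*d*q powi (int n - 1) = T*Q/q" unfolding T_def Q_def using nz by (simp add: powi_nm1)
  have h11: "qpoch (T*Q/q) q (Suc k) = V*S"
  proof -
    have "T*Q/q*q = T*Q" using nz by simp
    then show ?thesis unfolding qpoch_Suc_shift V_def S_def by simp
  qed
  have hS1: "qpoch (T*Q/q) q n = V*S0*inverse W2"
  proof -
    have "T*Q/q*q = T*Q" using nz by simp
    then have "qpoch (T*Q/q) q (Suc n) = V*S0" unfolding qpoch_Suc_shift V_def S0_def by simp
    then have "qpoch (T*Q/q) q n * W2 = V*S0" unfolding qpoch_Suc W2_def Q_def by (simp add: power2_eq_square mult.assoc)
    then show ?thesis using W20 by (simp add: field_simps)
  qed
  have hA0: "qpoch (a*b) q n = Z*A*inverse W1"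
  proof -
    have "qpoch (a*b) q n * W1 = Z*A" using h1 unfolding qpoch_Suc W1_def Q_def by simp
    then show ?thesis using W10 by (simp add: field_simps)
  qed
  have h12: "qpoch (inverse (q^n)) q (Suc k) = I*(1 - inverse Q*r)" unfolding qpoch_Suc I_def Q_def r_def ..
  have E3: "Cf n a b c d q (Suc k) = F * (W2*(1-r/Q)*q/(W1*(1-a*c*r)*(1-a*d*r)*(1-q*r)))"
    unfolding Cf_def arg3 hA0 hS1 h11 h12 h7 h8 h9 h10 eF
    unfolding divide_inverse inverse_mult_distrib inverse_inverse_eq power_Suc r_def[symmetric] AC_def[symmetric] AD_def[symmetric]
    by (rule cancel_helper2[where z="Z" and v=V]) (algebra, rule Z0, rule V0)
  have bT: "b*a*c*d = T" unfolding T_def by (simp add: mult_ac)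
  have hK: "aw_k n b a c d q = -((1-a*b*Q)*(1-b*c*Q)*(1-b*d*Q)*V)/(2*b*W2*(1-T*Q^2))"
    unfolding aw_k_def powi_nm1[OF nz(5)] powi_2nm1[OF nz(5)] bT V_def W2_def Q_def
    by (simp add: power_mult mult.commute[of 2 n] mult_ac)
  have PB: "-1/(2*a*r) + ((a*(q*r) + inverse (a*(q*r)))/2 - (inverse b + b)/2) * ((1-r/Q)*(1-T*Q*r)*q/((1-a*b*q*r)*(1-a*c*r)*(1-a*d*r)*(1-q*r)))
     = (1-a*c*Q)*(1-a*d*Q)*(1-1/(Q*q))*(1-T*Q*r)*q/(2*a*(1-T*Q^2)*(1-a*c*r)*(1-a*d*r)*(1-q*r))
       + (-((1-a*b*Q)*(1-b*c*Q)*(1-b*d*Q)*V)/(2*b*W2*(1-T*Q^2))) * (W2*(1-r/Q)*q/(W1*(1-a*c*r)*(1-a*d*r)*(1-q*r)))"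
  proof (cases "k < n")
    case True
    have abqr: "1 - a*b*q*r \<noteq> 0" using hab[rule_format, of "Suc k"] True unfolding r_def by (simp add: mult_ac)
    show ?thesis using pureB[of a b q Q r c d] nz Q0 r0 abqr acr adr qr TQ2 TQ2q abQ
      unfolding T_def V_def W1_def W2_def by (simp add: mult_ac)
  next
    case False
    then have rQ: "r = Q" using kn unfolding r_def Q_def by simp
    have z: "1 - Q/Q = 0" using Q0 by simp
    have acQ: "1 - a*c*Q \<noteq> 0" and adQ: "1 - a*d*Q \<noteq> 0" and qQ: "1 - q*Q \<noteq> 0"
      using acr adr qr unfolding rQ .
    have "-1/(2*a*Q) = (1-a*c*Q)*(1-a*d*Q)*(1-1/(Q*q))*(1-T*Q*Q)*q/(2*a*(1-T*Q^2)*(1-a*c*Q)*(1-a*d*Q)*(1-q*Q))"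
    proof -
      have tq: "T*Q*Q = T*Q^2" by (simp add: power2_eq_square)
      have "-1/(2*a*Q) = (1-1/(Q*q))*q/(2*a*(1-q*Q))" using nz Q0 qQ by (simp add: field_simps)
      also have "\<dots> = (1-a*c*Q)*(1-a*d*Q)*(1-1/(Q*q))*(1-T*Q*Q)*q/(2*a*(1-T*Q^2)*(1-a*c*Q)*(1-a*d*Q)*(1-q*Q))"
        unfolding tq using canc3[of "1-a*c*Q" "1-a*d*Q" "1-T*Q^2" "1-1/(Q*q)" q "2*a" "1-q*Q"] acQ adQ TQ2
        by simp
      finally show ?thesis .
    qed
    then show ?thesis unfolding rQ z by simp
  qed
  have m: "- F / (2*a*r) = F * (-1/(2*a*r))" by simp
  show ?thesis
    unfolding E1 E2 E3 hK F_def[symmetric] power_Suc r_def[symmetric] m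
    by (rule final_helper[OF PB])
qed



lemma split_frac: fixes a b Y P1 P2 Z :: complex
  assumes "a \<noteq> 0" "b \<noteq> 0" "Y \<noteq> 0"
  shows "(b*P1 - a*P2)*Z/(2*a*b*Y) = Z*P1/(2*a*Y) - Z*P2/(2*b*Y)"
  using assms by (simp add: field_simps)

lemma coefB_0:
  fixes a b c d q :: complex
  assumes nz: "a \<noteq> 0" "b \<noteq> 0" "c \<noteq> 0" "d \<noteq> 0" "q \<noteq> 0"
    and hab: "\<forall>j\<le>n. 1 - a*b*q^j \<noteq> 0" and hac: "\<forall>j\<le>n. 1 - a*c*q^j \<noteq> 0"
    and had: "\<forall>j\<le>n. 1 - a*d*q^j \<noteq> 0"
    and gen_abcd: "\<forall>m::int. int n - 1 \<le> m \<and> m \<le> 2 * int n \<longrightarrow> 1 - a*b*c*d * q powi m \<noteq> 0"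
  shows "Cf (Suc n) a b c d q 0 + aw_k n b a c d q * Cf n a b c d q 0
    = ((a*q^0 + inverse (a*q^0))/2 - (inverse b + b)/2) * Cf n a (b*q) c d q 0"
proof -
  define T where "T = a*b*c*d"
  define Q where "Q = q^n"
  define A where "A = qpoch (a*(b*q)) q n"
  define AC where "AC = qpoch (a*c) q n"
  define AD where "AD = qpoch (a*d) q n"
  define S0 where "S0 = qpoch (T*Q) q n"
  define F where "F = Cf n a (b*q) c d q 0"
  define Z where "Z = 1 - a*b"
  define V where "V = 1 - T*Q/q"
  define W1 where "W1 = 1 - a*b*Q"
  define W2 where "W2 = 1 - T*Q^2/q"
  have Q0: "Q \<noteq> 0" using nz unfolding Q_def by simp_all
  have hT: "\<And>m. n \<le> Suc m \<Longrightarrow> m \<le> 2*n \<Longrightarrow> 1 - T*q^m \<noteq> 0"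
    unfolding T_def using Tnz[OF nz(5) gen_abcd] by blast
  have S00: "S0 \<noteq> 0" unfolding S0_def
  proof (rule qpoch_nz)
    fix j assume "j < n" then show "1 - T*Q*q^j \<noteq> 0" using hT[of "n+j"] unfolding Q_def by (simp add: power_add mult.assoc)
  qed
  have abQ: "W1 \<noteq> 0" using hab unfolding Q_def W1_def by simp
  have Z0: "Z \<noteq> 0" using hab[rule_format, of 0] unfolding Z_def by simp
  have TQ2: "1 - T*Q^2 \<noteq> 0" using hT[of "2*n"] unfolding Q_def by (simp add: power_mult mult.commute)
  have W20: "W2 \<noteq> 0" using gen_abcd[rule_format, of "2 * int n - 1"] powi_2nm1[OF nz(5), of n]
    unfolding T_def Q_def W2_def by simp
  have V0: "V \<noteq> 0" using gen_abcd[rule_format, of "int n - 1"] powi_nm1[OF nz(5), of n]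
    unfolding T_def Q_def V_def by simp
  have arg1: "a*(b*q)*c*d*q powi (int n - 1) = T*Q"
    using nz unfolding T_def Q_def by (simp add: powi_nm1)
  have eF: "F = inverse(a^n)*A*AC*AD/(2^n*S0)"
    unfolding F_def Cf_def arg1 A_def AC_def AD_def S0_def Q_def by simp
  have h1: "qpoch (a*b) q (Suc n) = Z*A" unfolding qpoch_Suc_shift A_def Z_def by (simp add: mult.assoc)
  have h2: "qpoch (a*c) q (Suc n) = AC*(1-a*c*Q)" unfolding qpoch_Suc AC_def Q_def ..
  have h3: "qpoch (a*d) q (Suc n) = AD*(1-a*d*Q)" unfolding qpoch_Suc AD_def Q_def ..
  have arg2: "a*b*c*d*q powi (int (Suc n) - 1) = T*Q" unfolding T_def Q_def by (simp add: power_int_of_nat)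
  have h6: "qpoch (T*Q) q (Suc n) = S0*(1-T*Q^2)" unfolding qpoch_Suc S0_def Q_def by (simp add: power2_eq_square)
  have arg3: "a*b*c*d*q powi (int n - 1) = T*Q/q" unfolding T_def Q_def using nz by (simp add: powi_nm1)
  have hS1: "qpoch (T*Q/q) q n = V*S0*inverse W2"
  proof -
    have "T*Q/q*q = T*Q" using nz by simp
    then have "qpoch (T*Q/q) q (Suc n) = V*S0" unfolding qpoch_Suc_shift V_def S0_def by simp
    then have "qpoch (T*Q/q) q n * W2 = V*S0" unfolding qpoch_Suc W2_def Q_def by (simp add: power2_eq_square mult.assoc)
    then show ?thesis using W20 by (simp add: field_simps)
  qed
  have hA0: "qpoch (a*b) q n = Z*A*inverse W1"
  proof -
    have "qpoch (a*b) q n * W1 = Z*A" using h1 unfolding qpoch_Suc W1_def Q_def by simp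
    then show ?thesis using abQ by (simp add: field_simps)
  qed
  have E2: "Cf (Suc n) a b c d q 0 = F * (Z*(1-a*c*Q)*(1-a*d*Q)/(2*a*(1-T*Q^2)))"
    unfolding Cf_def arg2 h1 h2 h3 h6 eF
    unfolding divide_inverse inverse_mult_distrib power_Suc by simp
  have E3: "Cf n a b c d q 0 = F * (Z*W2/(W1*V))"
    unfolding Cf_def arg3 hA0 hS1 eF
    unfolding divide_inverse inverse_mult_distrib inverse_inverse_eq AC_def[symmetric] AD_def[symmetric]
      qpoch_0 power_0 mult_1_left mult_1_right inverse_1
    by algebra
  have bT: "b*a*c*d = T" unfolding T_def by (simp add: mult_ac)
  have hK: "aw_k n b a c d q = -((1-a*b*Q)*(1-b*c*Q)*(1-b*d*Q)*V)/(2*b*W2*(1-T*Q^2))"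
    unfolding aw_k_def powi_nm1[OF nz(5)] powi_2nm1[OF nz(5)] bT V_def W2_def Q_def
    by (simp add: power_mult mult.commute[of 2 n] mult_ac)
  have poly: "(b-a)*(1-T*Q^2) = b*(1-a*c*Q)*(1-a*d*Q) - a*(1-b*c*Q)*(1-b*d*Q)"
    unfolding T_def by algebra
  have PB: "(a + inverse a)/2 - (inverse b + b)/2 = Z*(1-a*c*Q)*(1-a*d*Q)/(2*a*(1-T*Q^2))
     + (-((1-a*b*Q)*(1-b*c*Q)*(1-b*d*Q)*V)/(2*b*W2*(1-T*Q^2))) * (Z*W2/(W1*V))"
  proof -
    have "(-((1-a*b*Q)*(1-b*c*Q)*(1-b*d*Q)*V)/(2*b*W2*(1-T*Q^2))) * (Z*W2/(W1*V))
       = - (Z*(1-b*c*Q)*(1-b*d*Q))/(2*b*(1-T*Q^2))"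
      unfolding W1_def[symmetric] using abQ V0 W20 nz TQ2 by (simp add: field_simps)
    moreover have "(a + inverse a)/2 - (inverse b + b)/2 = Z*(1-a*c*Q)*(1-a*d*Q)/(2*a*(1-T*Q^2)) - (Z*(1-b*c*Q)*(1-b*d*Q))/(2*b*(1-T*Q^2))"
    proof -
      have "(a + inverse a)/2 - (inverse b + b)/2 = (b-a)*Z/(2*a*b)" unfolding Z_def using nz by (simp add: field_simps)
      also have "\<dots> = (b-a)*(1-T*Q^2)*Z/(2*a*b*(1-T*Q^2))" using TQ2 by simp
      also have "\<dots> = (b*(1-a*c*Q)*(1-a*d*Q) - a*(1-b*c*Q)*(1-b*d*Q))*Z/(2*a*b*(1-T*Q^2))" unfolding poly ..
      also have "\<dots> = Z*(1-a*c*Q)*(1-a*d*Q)/(2*a*(1-T*Q^2)) - (Z*(1-b*c*Q)*(1-b*d*Q))/(2*b*(1-T*Q^2))"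
        using split_frac[of a b "1-T*Q^2" "(1-a*c*Q)*(1-a*d*Q)" "(1-b*c*Q)*(1-b*d*Q)" Z] nz TQ2
        by (simp add: mult.assoc)
      finally show ?thesis .
    qed
    ultimately show ?thesis by simp
  qed
  have m: "(a*q^0 + inverse (a*q^0))/2 - (inverse b + b)/2 = (a + inverse a)/2 - (inverse b + b)/2" by simp
  show ?thesis unfolding E2 E3 hK F_def[symmetric] m PB by (simp add: algebra_simps)
qed




lemma cancel5: fixes x y za zb zc zd ze :: complex
  assumes "x = (za*inverse za)*((zb*inverse zb)*((zc*inverse zc)*((zd*inverse zd)*((ze*inverse ze)*y))))"
    "za \<noteq> 0" "zb \<noteq> 0" "zc \<noteq> 0" "zd \<noteq> 0" "ze \<noteq> 0"
  shows "x = y"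
  using assms by simp

lemma coefA_0:
  fixes a b c d q :: complex
  assumes nz: "a \<noteq> 0" "b \<noteq> 0" "c \<noteq> 0" "d \<noteq> 0" "q \<noteq> 0"
    and gen_abcd: "\<forall>m::int. int n - 1 \<le> m \<and> m \<le> 2 * int n \<longrightarrow> 1 - a*b*c*d * q powi m \<noteq> 0"
  shows "Cf (Suc n) a b c d q 0 + aw_k n a b c d q * Cf n a b c d q 0 = 0"
proof -
  define T where "T = a*b*c*d"
  define Q where "Q = q^n"
  define A0 where "A0 = qpoch (a*b) q n"
  define C0 where "C0 = qpoch (a*c) q n"
  define D0 where "D0 = qpoch (a*d) q n"
  define S0 where "S0 = qpoch (T*Q) q n"
  define V where "V = 1 - T*Q/q"
  define W2 where "W2 = 1 - T*Q^2/q"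
  have W20: "W2 \<noteq> 0" using gen_abcd[rule_format, of "2 * int n - 1"] powi_2nm1[OF nz(5), of n]
    unfolding T_def Q_def W2_def by simp
  have V0: "V \<noteq> 0" using gen_abcd[rule_format, of "int n - 1"] powi_nm1[OF nz(5), of n]
    unfolding T_def Q_def V_def by simp
  have arg2: "a*b*c*d*q powi (int (Suc n) - 1) = T*Q" unfolding T_def Q_def by (simp add: power_int_of_nat)
  have h6: "qpoch (T*Q) q (Suc n) = S0*(1-T*Q^2)" unfolding qpoch_Suc S0_def Q_def by (simp add: power2_eq_square)
  have arg3: "a*b*c*d*q powi (int n - 1) = T*Q/q" unfolding T_def Q_def using nz by (simp add: powi_nm1)
  have hS1: "qpoch (T*Q/q) q n = V*S0*inverse W2"
  proof -
    have "T*Q/q*q = T*Q" using nz by simp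
    then have "qpoch (T*Q/q) q (Suc n) = V*S0" unfolding qpoch_Suc_shift V_def S0_def by simp
    then have "qpoch (T*Q/q) q n * W2 = V*S0" unfolding qpoch_Suc W2_def Q_def by (simp add: power2_eq_square mult.assoc)
    then show ?thesis using W20 by (simp add: field_simps)
  qed
  have h1: "qpoch (a*b) q (Suc n) = A0*(1-a*b*Q)" unfolding qpoch_Suc A0_def Q_def ..
  have h2: "qpoch (a*c) q (Suc n) = C0*(1-a*c*Q)" unfolding qpoch_Suc C0_def Q_def ..
  have h3: "qpoch (a*d) q (Suc n) = D0*(1-a*d*Q)" unfolding qpoch_Suc D0_def Q_def ..
  have aT: "a*b*c*d = T" unfolding T_def ..
  have hK: "aw_k n a b c d q = -(((1-a*b*Q)*(1-a*c*Q)*(1-a*d*Q)*V)/(2*a*W2*(1-T*Q^2)))"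
    unfolding aw_k_def powi_nm1[OF nz(5)] powi_2nm1[OF nz(5)] aT V_def W2_def Q_def
    by (simp add: power_mult mult.commute[of 2 n])
  have "Cf (Suc n) a b c d q 0 = ((1-a*b*Q)*(1-a*c*Q)*(1-a*d*Q)*V)/(2*a*W2*(1-T*Q^2)) * Cf n a b c d q 0"
    unfolding Cf_def arg2 arg3 h1 h2 h3 h6 hS1 A0_def[symmetric] C0_def[symmetric] D0_def[symmetric]
    unfolding divide_inverse inverse_mult_distrib inverse_inverse_eq qpoch_0 power_0 mult_1_left mult_1_right inverse_1 power_Suc
    by (rule sym, rule cancel_helper2[where z=V and v=W2]) (algebra, simp_all add: V0 W20)
  then show ?thesis unfolding hK by simp
qed

lemma cancel_gen: fixes x y w za zb zc zd :: complex
  assumes "w*inverse w * x = za*inverse za*(zb*inverse zb*(zc*inverse zc*(zd*inverse zd * y)))"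
    "w \<noteq> 0" "za \<noteq> 0" "zb \<noteq> 0" "zc \<noteq> 0" "zd \<noteq> 0"
  shows "x = y"
  using assms by simp

lemma cancel_gen3: fixes x y w za zb zc :: complex
  assumes "w*inverse w * x = za*inverse za*(zb*inverse zb*(zc*inverse zc * y))"
    "w \<noteq> 0" "za \<noteq> 0" "zb \<noteq> 0" "zc \<noteq> 0"
  shows "x = y"
  using assms by simp

lemma canck: fixes P W V a Y Q u q X :: complex
  assumes "P \<noteq> 0" "W \<noteq> 0"
  shows "(-((P*V)/(2*a*W*Y))) * (Q*W*u*q/(P*X)) = -(V*Q*u*q)/(2*a*Y*X)"
proof -
  have "(P*V)/(2*a*W*Y) * (Q*W*u*q/(P*X)) = (V*Q*u*q)/(2*a*Y*X)"
    unfolding divide_inverse inverse_mult_distrib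
    by (rule cancel_helper2[where z=P and v=W]) (algebra, simp_all add: assms)
  then show ?thesis by simp
qed

lemma final_helperA: fixes F m r2 r3 k :: complex
  assumes "m = r2 + k*r3" shows "F*r2 + k*(F*r3) = F*m"
  using assms by (simp add: algebra_simps)

lemma coefA_Suc:
  fixes a b c d q :: complex
  assumes nz: "a \<noteq> 0" "b \<noteq> 0" "c \<noteq> 0" "d \<noteq> 0" "q \<noteq> 0"
    and kn: "k \<le> n"
    and hab: "\<forall>j\<le>n. 1 - a*b*q^j \<noteq> 0" and hac: "\<forall>j\<le>n. 1 - a*c*q^j \<noteq> 0"
    and had: "\<forall>j\<le>n. 1 - a*d*q^j \<noteq> 0"
    and gen_q: "\<forall>j\<in>{1..n+1}. 1 - q ^ j \<noteq> 0"
    and gen_abcd: "\<forall>m::int. int n - 1 \<le> m \<and> m \<le> 2 * int n \<longrightarrow> 1 - a*b*c*d * q powi m \<noteq> 0"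
  shows "Cf (Suc n) a b c d q (Suc k) + aw_k n a b c d q * Cf n a b c d q (Suc k)
    = - Cf n (a*q) b c d q k / (2*a)"
proof -
  define T where "T = a*b*c*d"
  define Q where "Q = q^n"
  define r where "r = q^k"
  define Ab where "Ab = qpoch (a*q*b) q n"
  define Ac where "Ac = qpoch (a*q*c) q n"
  define Ad where "Ad = qpoch (a*q*d) q n"
  define I where "I = qpoch (inverse Q) q k"
  define S where "S = qpoch (T*Q) q k"
  define S0 where "S0 = qpoch (T*Q) q n"
  define Bb where "Bb = qpoch (a*q*b) q k"
  define Bc where "Bc = qpoch (a*q*c) q k"
  define Bd where "Bd = qpoch (a*q*d) q k"
  define Qk where "Qk = qpoch q q k"
  define F where "F = Cf n (a*q) b c d q k"
  define Zb where "Zb = 1 - a*b"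
  define Zc where "Zc = 1 - a*c"
  define Zd where "Zd = 1 - a*d"
  define V where "V = 1 - T*Q/q"
  define W1b where "W1b = 1 - a*b*Q"
  define W1c where "W1c = 1 - a*c*Q"
  define W1d where "W1d = 1 - a*d*Q"
  define W2 where "W2 = 1 - T*Q^2/q"
  have Q0: "Q \<noteq> 0" and r0: "r \<noteq> 0" using nz unfolding Q_def r_def by simp_all
  have hT: "\<And>m. n \<le> Suc m \<Longrightarrow> m \<le> 2*n \<Longrightarrow> 1 - T*q^m \<noteq> 0"
    unfolding T_def using Tnz[OF nz(5) gen_abcd] by blast
  have Zb0: "Zb \<noteq> 0" using hab[rule_format, of 0] unfolding Zb_def by simp
  have Zc0: "Zc \<noteq> 0" using hac[rule_format, of 0] unfolding Zc_def by simp
  have Zd0: "Zd \<noteq> 0" using had[rule_format, of 0] unfolding Zd_def by simp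
  have W1b0: "W1b \<noteq> 0" using hab unfolding Q_def W1b_def by simp
  have W1c0: "W1c \<noteq> 0" using hac unfolding Q_def W1c_def by simp
  have W1d0: "W1d \<noteq> 0" using had unfolding Q_def W1d_def by simp
  have qr: "1 - q*r \<noteq> 0" using gen_q kn unfolding r_def by (auto simp flip: power_Suc)
  have TQ2: "1 - T*Q^2 \<noteq> 0" using hT[of "2*n"] unfolding Q_def by (simp add: power_mult mult.commute)
  have W20: "W2 \<noteq> 0" using gen_abcd[rule_format, of "2 * int n - 1"] powi_2nm1[OF nz(5), of n]
    unfolding T_def Q_def W2_def by simp
  have V0: "V \<noteq> 0" using gen_abcd[rule_format, of "int n - 1"] powi_nm1[OF nz(5), of n]
    unfolding T_def Q_def V_def by simp
  have argA: "a*q*b*c*d*q powi (int n - 1) = T*Q"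
    using nz unfolding T_def Q_def by (simp add: powi_nm1)
  have eF: "F = inverse((a*q)^n)*Ab*Ac*Ad*((I*S)/(Bb*Bc*Bd*Qk)*r)/(2^n*S0)"
    unfolding F_def Cf_def argA Ab_def Ac_def Ad_def I_def S_def S0_def Bb_def Bc_def Bd_def Qk_def Q_def r_def by simp
  have h1b: "qpoch (a*b) q (Suc n) = Zb*Ab" unfolding qpoch_Suc_shift Ab_def Zb_def by (simp add: mult_ac)
  have h1c: "qpoch (a*c) q (Suc n) = Zc*Ac" unfolding qpoch_Suc_shift Ac_def Zc_def by (simp add: mult_ac)
  have h1d: "qpoch (a*d) q (Suc n) = Zd*Ad" unfolding qpoch_Suc_shift Ad_def Zd_def by (simp add: mult_ac)
  have h7b: "qpoch (a*b) q (Suc k) = Zb*Bb" unfolding qpoch_Suc_shift Bb_def Zb_def by (simp add: mult_ac)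
  have h7c: "qpoch (a*c) q (Suc k) = Zc*Bc" unfolding qpoch_Suc_shift Bc_def Zc_def by (simp add: mult_ac)
  have h7d: "qpoch (a*d) q (Suc k) = Zd*Bd" unfolding qpoch_Suc_shift Bd_def Zd_def by (simp add: mult_ac)
  have h4: "qpoch (inverse (q^Suc n)) q (Suc k) = (1 - inverse(Q*q))*I"
  proof -
    have e: "inverse (q^Suc n) * q = inverse Q" using nz unfolding Q_def by (simp add: field_simps)
    have e2: "inverse (q^Suc n) = inverse(Q*q)" unfolding Q_def by (simp add: mult.commute)
    show ?thesis unfolding qpoch_Suc_shift e unfolding e2 I_def ..
  qed
  have arg2: "a*b*c*d*q powi (int (Suc n) - 1) = T*Q" unfolding T_def Q_def by (simp add: power_int_of_nat)
  have h5: "qpoch (T*Q) q (Suc k) = S*(1-T*Q*r)" unfolding qpoch_Suc S_def r_def by simp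
  have h6: "qpoch (T*Q) q (Suc n) = S0*(1-T*Q^2)" unfolding qpoch_Suc S0_def Q_def by (simp add: power2_eq_square)
  have h10: "qpoch q q (Suc k) = Qk*(1-q*r)" unfolding qpoch_Suc Qk_def r_def ..
  have aqn: "inverse ((a*q)^n) = inverse (a^n) * inverse Q" unfolding Q_def by (simp add: power_mult_distrib)
  have E2: "Cf (Suc n) a b c d q (Suc k) = F * (Q*(1-1/(Q*q))*(1-T*Q*r)*q/(2*a*(1-T*Q^2)*(1-q*r)))"
    unfolding Cf_def arg2 h1b h1c h1d h4 h5 h6 h7b h7c h7d h10 eF aqn
    unfolding divide_inverse inverse_mult_distrib power_Suc r_def[symmetric]
    by (rule cancel_gen3[where w=Q and za=Zb and zb=Zc and zc=Zd]) (algebra, simp_all add: Q0 Zb0 Zc0 Zd0)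
  have arg3: "a*b*c*d*q powi (int n - 1) = T*Q/q" unfolding T_def Q_def using nz by (simp add: powi_nm1)
  have h11: "qpoch (T*Q/q) q (Suc k) = V*S"
  proof -
    have "T*Q/q*q = T*Q" using nz by simp
    then show ?thesis unfolding qpoch_Suc_shift V_def S_def by simp
  qed
  have hS1: "qpoch (T*Q/q) q n = V*S0*inverse W2"
  proof -
    have "T*Q/q*q = T*Q" using nz by simp
    then have "qpoch (T*Q/q) q (Suc n) = V*S0" unfolding qpoch_Suc_shift V_def S0_def by simp
    then have "qpoch (T*Q/q) q n * W2 = V*S0" unfolding qpoch_Suc W2_def Q_def by (simp add: power2_eq_square mult.assoc)
    then show ?thesis using W20 by (simp add: field_simps)
  qed
  have hA0b: "qpoch (a*b) q n = Zb*Ab*inverse W1b"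
  proof -
    have "qpoch (a*b) q n * W1b = Zb*Ab" using h1b unfolding qpoch_Suc W1b_def Q_def by simp
    then show ?thesis using W1b0 by (simp add: field_simps)
  qed
  have hA0c: "qpoch (a*c) q n = Zc*Ac*inverse W1c"
  proof -
    have "qpoch (a*c) q n * W1c = Zc*Ac" using h1c unfolding qpoch_Suc W1c_def Q_def by simp
    then show ?thesis using W1c0 by (simp add: field_simps)
  qed
  have hA0d: "qpoch (a*d) q n = Zd*Ad*inverse W1d"
  proof -
    have "qpoch (a*d) q n * W1d = Zd*Ad" using h1d unfolding qpoch_Suc W1d_def Q_def by simp
    then show ?thesis using W1d0 by (simp add: field_simps)
  qed
  have h12: "qpoch (inverse (q^n)) q (Suc k) = I*(1 - inverse Q*r)" unfolding qpoch_Suc I_def Q_def r_def ..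
  have E3: "Cf n a b c d q (Suc k) = F * (Q*W2*(1-r/Q)*q/(W1b*W1c*W1d*(1-q*r)))"
    unfolding Cf_def arg3 hA0b hA0c hA0d hS1 h11 h12 h7b h7c h7d h10 eF aqn
    unfolding divide_inverse inverse_mult_distrib inverse_inverse_eq power_Suc r_def[symmetric]
    by (rule cancel_gen[where w=Q and za=Zb and zb=Zc and zc=Zd and zd=V]) (algebra, simp_all add: Q0 Zb0 Zc0 Zd0 V0)
  have aT: "a*b*c*d = T" unfolding T_def ..
  have hK: "aw_k n a b c d q = -((W1b*W1c*W1d*V)/(2*a*W2*(1-T*Q^2)))"
    unfolding aw_k_def powi_nm1[OF nz(5)] powi_2nm1[OF nz(5)] aT V_def W2_def Q_def W1b_def W1c_def W1d_def
    by (simp add: power_mult mult.commute[of 2 n])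
  have PA: "-1/(2*a) = Q*(1-1/(Q*q))*(1-T*Q*r)*q/(2*a*(1-T*Q^2)*(1-q*r))
      + (-((W1b*W1c*W1d*V)/(2*a*W2*(1-T*Q^2)))) * (Q*W2*(1-r/Q)*q/(W1b*W1c*W1d*(1-q*r)))"
  proof -
    define D where "D = 2*a*(1-T*Q^2)*(1-q*r)"
    have D0: "D \<noteq> 0" unfolding D_def using nz TQ2 qr by simp
    have k1: "(-((W1b*W1c*W1d*V)/(2*a*W2*(1-T*Q^2)))) * (Q*W2*(1-r/Q)*q/(W1b*W1c*W1d*(1-q*r)))
        = - (V*Q*(1-r/Q)*q)/D"
      unfolding D_def using canck[of "W1b*W1c*W1d" W2 V a "1-T*Q^2" Q "1-r/Q" q "1-q*r"] W1b0 W1c0 W1d0 W20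
      by (simp add: mult.assoc)
    have k2: "V*Q*(1-r/Q)*q = (q-T*Q)*(Q-r)" unfolding V_def using nz Q0 by (simp add: field_simps)
    have k3: "Q*(1-1/(Q*q))*(1-T*Q*r)*q = (Q*q-1)*(1-T*Q*r)" using nz Q0 by (simp add: field_simps)
    have k4: "(Q*q-1)*(1-T*Q*r) - (q-T*Q)*(Q-r) = - ((1-T*Q^2)*(1-q*r))" by algebra
    have "-1/(2*a) = - ((1-T*Q^2)*(1-q*r))/D" unfolding D_def using TQ2 qr by simp
    also have "\<dots> = (Q*q-1)*(1-T*Q*r)/D - (q-T*Q)*(Q-r)/D" unfolding k4[symmetric] by (simp add: diff_divide_distrib)
    finally show ?thesis unfolding k1 k2 unfolding D_def k3[symmetric] by simp
  qed
  have m: "- F / (2*a) = F * (-1/(2*a))" by simp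
  show ?thesis
    unfolding E2 E3 hK F_def[symmetric] m
    by (rule final_helperA[OF PA])
qed




lemma idA:
  fixes a b c d q \<theta> :: complex
  assumes nz: "a \<noteq> 0" "b \<noteq> 0" "c \<noteq> 0" "d \<noteq> 0" "q \<noteq> 0"
    and hab: "\<forall>j\<le>n. 1 - a*b*q^j \<noteq> 0" and hac: "\<forall>j\<le>n. 1 - a*c*q^j \<noteq> 0"
    and had: "\<forall>j\<le>n. 1 - a*d*q^j \<noteq> 0"
    and gen_q: "\<forall>j\<in>{1..n+1}. 1 - q ^ j \<noteq> 0"
    and gen_abcd: "\<forall>m::int. int n - 1 \<le> m \<and> m \<le> 2 * int n \<longrightarrow> 1 - a*b*c*d * q powi m \<noteq> 0"
  shows "(cos \<theta> - (inverse a + a) / 2) * aw_P n (a*q) b c d q \<theta>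
           = aw_P (n+1) a b c d q \<theta> + aw_k n a b c d q * aw_P n a b c d q \<theta>"
proof -
  define \<phi> where "\<phi> = phi a q \<theta>"
  define K where "K = aw_k n a b c d q"
  have L: "(cos \<theta> - (inverse a + a) / 2) * aw_P n (a*q) b c d q \<theta>
      = (\<Sum>j\<le>n. - Cf n (a*q) b c d q j / (2*a) * \<phi> (Suc j))"
    unfolding aw_P_sum sum_distrib_left
  proof (rule sum.cong[OF refl])
    fix j
    show "(cos \<theta> - (inverse a + a) / 2) * (Cf n (a*q) b c d q j * phi (a*q) q \<theta> j)
        = - Cf n (a*q) b c d q j / (2*a) * \<phi> (Suc j)"
    proof -
      have "(cos \<theta> - (inverse a + a) / 2) * (Cf n (a*q) b c d q j * phi (a*q) q \<theta> j)
         = Cf n (a*q) b c d q j * ((cos \<theta> - (inverse a + a) / 2) * phi (a*q) q \<theta> j)"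
        by (simp only: mult.left_commute)
      also have "\<dots> = Cf n (a*q) b c d q j * (- phi a q \<theta> (Suc j) / (2*a))"
        unfolding phi_step_a[OF nz(1)] ..
      finally show ?thesis unfolding \<phi>_def by simp
    qed
  qed
  have R1: "aw_P n a b c d q \<theta> = (\<Sum>j\<le>Suc n. Cf n a b c d q j * \<phi> j)"
    unfolding aw_P_sum \<phi>_def using Cf_top[OF nz(5)] by simp
  have "aw_P (n+1) a b c d q \<theta> + K * aw_P n a b c d q \<theta>
      = (\<Sum>j\<le>Suc n. (Cf (Suc n) a b c d q j + K * Cf n a b c d q j) * \<phi> j)"
    unfolding R1 unfolding aw_P_sum \<phi>_def[symmetric]
    by (simp add: sum_distrib_left sum.distrib algebra_simps)
  also have "\<dots> = (Cf (Suc n) a b c d q 0 + K * Cf n a b c d q 0) * \<phi> 0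
      + (\<Sum>j\<le>n. (Cf (Suc n) a b c d q (Suc j) + K * Cf n a b c d q (Suc j)) * \<phi> (Suc j))"
    by (rule sum.atMost_Suc_shift)
  also have "\<dots> = (\<Sum>j\<le>n. - Cf n (a*q) b c d q j / (2*a) * \<phi> (Suc j))"
    unfolding K_def coefA_0[OF nz gen_abcd]
    using coefA_Suc[OF nz _ hab hac had gen_q gen_abcd] by simp
  finally show ?thesis unfolding L K_def by simp
qed

lemma idB:
  fixes a b c d q \<theta> :: complex
  assumes nz: "a \<noteq> 0" "b \<noteq> 0" "c \<noteq> 0" "d \<noteq> 0" "q \<noteq> 0"
    and hab: "\<forall>j\<le>n. 1 - a*b*q^j \<noteq> 0" and hac: "\<forall>j\<le>n. 1 - a*c*q^j \<noteq> 0"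
    and had: "\<forall>j\<le>n. 1 - a*d*q^j \<noteq> 0"
    and gen_q: "\<forall>j\<in>{1..n+1}. 1 - q ^ j \<noteq> 0"
    and gen_abcd: "\<forall>m::int. int n - 1 \<le> m \<and> m \<le> 2 * int n \<longrightarrow> 1 - a*b*c*d * q powi m \<noteq> 0"
  shows "(cos \<theta> - (inverse b + b) / 2) * aw_P n a (b*q) c d q \<theta>
           = aw_P (n+1) a b c d q \<theta> + aw_k n b a c d q * aw_P n a b c d q \<theta>"
proof -
  define \<phi> where "\<phi> = phi a q \<theta>"
  define K where "K = aw_k n b a c d q"
  define C' where "C' = Cf n a (b*q) c d q"
  define g where "g = (\<lambda>j. (a*q^j + inverse (a*q^j))/2 - (inverse b + b)/2)"
  have L: "(cos \<theta> - (inverse b + b) / 2) * aw_P n a (b*q) c d q \<theta>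
      = (\<Sum>j\<le>n. - C' j / (2*a*q^j) * \<phi> (Suc j)) + (\<Sum>j\<le>n. g j * C' j * \<phi> j)"
    unfolding aw_P_sum sum_distrib_left sum.distrib[symmetric]
  proof (rule sum.cong[OF refl])
    fix j
    show "(cos \<theta> - (inverse b + b) / 2) * (Cf n a (b*q) c d q j * phi a q \<theta> j)
        = - C' j / (2*a*q^j) * \<phi> (Suc j) + g j * C' j * \<phi> j"
    proof -
      have "(cos \<theta> - (inverse b + b) / 2) * (C' j * \<phi> j) = C' j * (cos \<theta> * \<phi> j) - (inverse b + b) / 2 * C' j * \<phi> j"
        by (simp add: algebra_simps)
      also have "\<dots> = - C' j / (2*a*q^j) * \<phi> (Suc j) + g j * C' j * \<phi> j"
        unfolding \<phi>_def phi_step[OF nz(1,5)] g_def by (simp add: algebra_simps)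
      finally show ?thesis unfolding C'_def \<phi>_def .
    qed
  qed
  have G: "(\<Sum>j\<le>n. g j * C' j * \<phi> j) = g 0 * C' 0 * \<phi> 0 + (\<Sum>j\<le>n. g (Suc j) * C' (Suc j) * \<phi> (Suc j))"
  proof -
    have c0: "C' (Suc n) = 0" unfolding C'_def by (rule Cf_top[OF nz(5)])
    have "(\<Sum>j\<le>n. g j * C' j * \<phi> j) = (\<Sum>j\<le>Suc n. g j * C' j * \<phi> j)"
      using c0 by simp
    also have "\<dots> = g 0 * C' 0 * \<phi> 0 + (\<Sum>j\<le>n. g (Suc j) * C' (Suc j) * \<phi> (Suc j))"
      by (rule sum.atMost_Suc_shift)
    finally show ?thesis .
  qed
  have R1: "aw_P n a b c d q \<theta> = (\<Sum>j\<le>Suc n. Cf n a b c d q j * \<phi> j)"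
    unfolding aw_P_sum \<phi>_def using Cf_top[OF nz(5)] by simp
  have "aw_P (n+1) a b c d q \<theta> + K * aw_P n a b c d q \<theta>
      = (\<Sum>j\<le>Suc n. (Cf (Suc n) a b c d q j + K * Cf n a b c d q j) * \<phi> j)"
    unfolding R1 unfolding aw_P_sum \<phi>_def[symmetric]
    by (simp add: sum_distrib_left sum.distrib algebra_simps)
  also have "\<dots> = (Cf (Suc n) a b c d q 0 + K * Cf n a b c d q 0) * \<phi> 0
      + (\<Sum>j\<le>n. (Cf (Suc n) a b c d q (Suc j) + K * Cf n a b c d q (Suc j)) * \<phi> (Suc j))"
    by (rule sum.atMost_Suc_shift)
  also have "\<dots> = g 0 * C' 0 * \<phi> 0 + (\<Sum>j\<le>n. (- C' j / (2*a*q^j) + g (Suc j) * C' (Suc j)) * \<phi> (Suc j))"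
    unfolding K_def coefB_0[OF nz hab hac had gen_abcd] g_def C'_def
    using coefB_Suc[OF nz _ hab hac had gen_q gen_abcd] by simp
  also have "\<dots> = (\<Sum>j\<le>n. - C' j / (2*a*q^j) * \<phi> (Suc j)) + (\<Sum>j\<le>n. g j * C' j * \<phi> j)"
    unfolding G distrib_right sum.distrib by (simp only: add_ac)
  finally show ?thesis unfolding L K_def by simp
qed




lemma aw_P_swap_bc: "aw_P n a b c d q \<theta> = aw_P n a c b d q \<theta>"
  unfolding aw_P_def aw_p_def by (simp add: mult_ac)
lemma aw_P_swap_bd: "aw_P n a b c d q \<theta> = aw_P n a d c b q \<theta>"
  unfolding aw_P_def aw_p_def by (simp add: mult_ac)
lemma aw_k_eq1: "aw_k n c a b d q = aw_k n c b a d q"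
  unfolding aw_k_def by (simp add: mult_ac)
lemma aw_k_eq2: "aw_k n d a c b q = aw_k n d b c a q"
  unfolding aw_k_def by (simp add: mult_ac)

theorem lemma4p1:
  fixes a b c d q \<theta> :: complex and n :: nat
  assumes nz: "a \<noteq> 0" "b \<noteq> 0" "c \<noteq> 0" "d \<noteq> 0" "q \<noteq> 0"
    and gen_pair: "\<forall>j\<le>n. \<forall>u\<in>{a*b, a*c, a*d, b*c, b*d, c*d}. 1 - u * q ^ j \<noteq> 0"
    and gen_q: "\<forall>j\<in>{1..n+1}. 1 - q ^ j \<noteq> 0"
    and gen_abcd: "\<forall>m::int. int n - 1 \<le> m \<and> m \<le> 2 * int n \<longrightarrow> 1 - a*b*c*d * q powi m \<noteq> 0"
  defines "x \<equiv> cos \<theta>"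
  shows "(x - (inverse a + a) / 2) * aw_P n (a*q) b c d q \<theta>
           = aw_P (n+1) a b c d q \<theta> + aw_k n a b c d q * aw_P n a b c d q \<theta>
      \<and> (x - (inverse b + b) / 2) * aw_P n a (b*q) c d q \<theta>
           = aw_P (n+1) a b c d q \<theta> + aw_k n b a c d q * aw_P n a b c d q \<theta>
      \<and> (x - (inverse c + c) / 2) * aw_P n a b (c*q) d q \<theta>
           = aw_P (n+1) a b c d q \<theta> + aw_k n c b a d q * aw_P n a b c d q \<theta>
      \<and> (x - (inverse d + d) / 2) * aw_P n a b c (d*q) q \<theta>
           = aw_P (n+1) a b c d q \<theta> + aw_k n d b c a q * aw_P n a b c d q \<theta>"
proof -
  have hab: "\<forall>j\<le>n. 1 - a*b*q^j \<noteq> 0" using gen_pair by simp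
  have hac: "\<forall>j\<le>n. 1 - a*c*q^j \<noteq> 0" using gen_pair by simp
  have had: "\<forall>j\<le>n. 1 - a*d*q^j \<noteq> 0" using gen_pair by simp
  have g2: "\<forall>m::int. int n - 1 \<le> m \<and> m \<le> 2 * int n \<longrightarrow> 1 - a*c*b*d * q powi m \<noteq> 0"
    using gen_abcd by (simp add: mult_ac)
  have g3: "\<forall>m::int. int n - 1 \<le> m \<and> m \<le> 2 * int n \<longrightarrow> 1 - a*d*c*b * q powi m \<noteq> 0"
    using gen_abcd by (simp add: mult_ac)
  have c1: "(x - (inverse a + a) / 2) * aw_P n (a*q) b c d q \<theta>
           = aw_P (n+1) a b c d q \<theta> + aw_k n a b c d q * aw_P n a b c d q \<theta>"
    unfolding x_def by (rule idA[OF nz hab hac had gen_q gen_abcd])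
  have c2: "(x - (inverse b + b) / 2) * aw_P n a (b*q) c d q \<theta>
           = aw_P (n+1) a b c d q \<theta> + aw_k n b a c d q * aw_P n a b c d q \<theta>"
    unfolding x_def by (rule idB[OF nz hab hac had gen_q gen_abcd])
  have c3: "(x - (inverse c + c) / 2) * aw_P n a b (c*q) d q \<theta>
           = aw_P (n+1) a b c d q \<theta> + aw_k n c b a d q * aw_P n a b c d q \<theta>"
    using idB[OF nz(1,3,2,4,5) hac hab had gen_q g2, of \<theta>]
    unfolding x_def aw_k_eq1[of n c a b d q] aw_P_swap_bc[of _ a c b d] aw_P_swap_bc[of _ a "c*q" b d] .
  have c4: "(x - (inverse d + d) / 2) * aw_P n a b c (d*q) q \<theta>
           = aw_P (n+1) a b c d q \<theta> + aw_k n d b c a q * aw_P n a b c d q \<theta>"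
    using idB[OF nz(1,4,3,2,5) had hac hab gen_q g3, of \<theta>]
    unfolding x_def aw_k_eq2[of n d a c b q] aw_P_swap_bd[of _ a d c b] aw_P_swap_bd[of _ a "d*q" c b] .
  show ?thesis using c1 c2 c3 c4 by blast
qed


end
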